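(* Let $H,U$ be separable complex Hilbert spaces, $T>0$, $A$ the generator of a $C_0$-semigroup $e^{tA}$ on $H$ with $\|e^{tA}\|\le Ce^{\omega t}$, $K\in L^2(0,T;\mathbb R)$, $B\in\mathcal L(U,H)$. Let $\tau\in(0,T)$, $X_0=(\xi_0,\xi)\in H\times L^2(0,\tau;H)$, $u\in L^2(\tau,T;U)$, and let $w(\cdot;\tau,X_0)$ be the corresponding mild solution on $[\tau,T]$. For $\tau_1\in(\tau,T)$ put $X_1=(y_0,y(\cdot))\in H\times L^2(0,\tau_1;H)$ with $y_0=w(\tau_1;\tau,X_0)$, $y=\xi$ on $[0,\tau]$ and $y=w(\cdot;\tau,X_0)$ on $(\tau,\tau_1]$, and let $w(\cdot;\tau_1,X_1)$ be the mild solution starting at time $\tau_1$ from $X_1$ with the same control $u$ restricted to $[\tau_1,T]$. Then $w(t;\tau,X_0)=w(t;\tau_1,X_1)$ for all $t\in(\tau_1,T)$.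
   Context: For initial time $\tau$, datum $X_0=(\xi_0,\xi)$ and control $u$, the mild solution $w(\cdot;\tau,X_0)$ is the function $w\in L^2(\tau,T;H)$ satisfying a.e. on $[\tau,T]$: $w(t)=e^{(t-\tau)A}\xi_0+\int_\tau^te^{(t-s)A}\int_\tau^sK(s-\sigma)w(\sigma)d\sigma ds+\int_\tau^te^{(t-s)A}\int_0^\tau K(s-\sigma)\xi(\sigma)d\sigma ds+\int_\tau^te^{(t-s)A}Bu(s)ds$ (it exists, is unique and continuous); it is the mild solution of $w'=Aw+\int_\tau^tK(t-s)w(s)ds+\int_0^\tau K(t-s)\xi(s)ds+Bu$, $w(\tau)=\xi_0$. *)

theory Defs
  imports "HOL-Analysis.Analysis"
begin

text \<open>The generator A is determined by S and
  only enters the mild-solution formula through S t = e^(tA).\<close>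
definition c0_semigroup :: "(real \<Rightarrow> 'h::real_normed_vector \<Rightarrow> 'h) \<Rightarrow> real \<Rightarrow> real \<Rightarrow> bool" where
  "c0_semigroup S C \<omega> \<longleftrightarrow>
     (\<forall>t\<ge>0. bounded_linear (S t)) \<and>
     S 0 = id \<and>
     (\<forall>t\<ge>0. \<forall>s\<ge>0. S (t + s) = S t \<circ> S s) \<and>
     (\<forall>x. ((\<lambda>t. S t x) \<longlongrightarrow> x) (at_right 0)) \<and>
     (\<forall>t\<ge>0. \<forall>x. norm (S t x) \<le> C * exp (\<omega> * t) * norm x)"

definition L2_on :: "real \<Rightarrow> real \<Rightarrow> (real \<Rightarrow> 'h::{banach, second_countable_topology}) \<Rightarrow> bool" where
  "L2_on a b f \<longleftrightarrow>
     set_borel_measurable lborel {a..b} f \<and>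
     set_integrable lborel {a..b} (\<lambda>t. (norm (f t))\<^sup>2)"

definition mild_solution ::
  "(real \<Rightarrow> 'h::{real_inner, banach, second_countable_topology} \<Rightarrow> 'h) \<Rightarrow> (real \<Rightarrow> real) \<Rightarrow> ('u \<Rightarrow> 'h) \<Rightarrow> real \<Rightarrow>
   real \<Rightarrow> 'h \<Rightarrow> (real \<Rightarrow> 'h) \<Rightarrow> (real \<Rightarrow> 'u) \<Rightarrow> (real \<Rightarrow> 'h) \<Rightarrow> bool" where
  "mild_solution S K B T \<tau> \<xi>0 \<xi> u w \<longleftrightarrow>
     L2_on \<tau> T w \<and> continuous_on {\<tau>..T} w \<and>
     (AE t in lborel. t \<in> {\<tau>..T} \<longrightarrow>
        w t = S (t - \<tau>) \<xi>0
            + (LINT s:{\<tau>..t}|lborel. S (t - s) (LINT \<sigma>:{\<tau>..s}|lborel. K (s - \<sigma>) *\<^sub>R w \<sigma>))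
            + (LINT s:{\<tau>..t}|lborel. S (t - s) (LINT \<sigma>:{0..\<tau>}|lborel. K (s - \<sigma>) *\<^sub>R \<xi> \<sigma>))
            + (LINT s:{\<tau>..t}|lborel. S (t - s) (B (u s))))"

end

theory Submission
  imports Defs
begin


lemma EX_AE:
  assumes "AE t in lborel. P t" "a < (b::real)"
  shows "\<exists>t\<in>{a<..<b}. P t"
proof (rule ccontr)
  assume "\<not> ?thesis"
  then have "AE t in lborel. \<not> t \<in> {a<..<b}" using assms(1) by (auto elim!: eventually_mono)
  then have "emeasure lborel {x\<in>space lborel. x \<in> {a<..<b}} = 0" by (rule emeasure_eq_0_AE)
  moreover have "{x\<in>space lborel. x \<in> {a<..<b}} = {a<..<b}" by auto
  ultimately show False using assms(2) by simp
qed

lemma cont_ae_le: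
  fixes f :: "real \<Rightarrow> real"
  assumes fc: "continuous_on {a..b} f" and ab: "a < b" and ae: "AE t in lborel. t \<in> {a..b} \<longrightarrow> f t \<le> c"
  shows "\<forall>t\<in>{a..b}. f t \<le> c"
proof
  fix t0 assume t0: "t0 \<in> {a..b}"
  show "f t0 \<le> c"
  proof (rule ccontr)
    assume "\<not> f t0 \<le> c"
    then have e: "f t0 - c > 0" by simp
    obtain d where d: "d > 0" "\<And>t. t \<in> {a..b} \<Longrightarrow> dist t t0 < d \<Longrightarrow> dist (f t) (f t0) < f t0 - c"
      using fc t0 e unfolding continuous_on_iff by metis
    have gt: "f t > c" if "t \<in> {a..b}" "dist t t0 < d" for t
      using d(2)[OF that] by (simp add: dist_real_def abs_if split: if_splits)
    show False
    proof (cases "t0 < b")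
      case True
      obtain t where t: "t \<in> {t0<..<min b (t0 + d)}" "t \<in> {a..b} \<longrightarrow> f t \<le> c"
        using EX_AE[OF ae, of t0 "min b (t0 + d)"] True d(1) by auto
      have t1: "t \<in> {a..b}" using t(1) t0 by auto
      have t2: "dist t t0 < d" using t(1) t0 by (auto simp: dist_real_def)
      show False using gt[OF t1 t2] t(2) t1 by linarith
    next
      case False
      then have "t0 = b" using t0 by auto
      obtain t where t: "t \<in> {max a (t0 - d)<..<t0}" "t \<in> {a..b} \<longrightarrow> f t \<le> c"
        using EX_AE[OF ae, of "max a (t0 - d)" t0] \<open>t0 = b\<close> ab d(1) by auto
      have t1: "t \<in> {a..b}" using t(1) t0 by auto
      have t2: "dist t t0 < d" using t(1) t0 by (auto simp: dist_real_def)
      show False using gt[OF t1 t2] t(2) t1 by linarith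
    qed
  qed
qed

lemma set_int_point_zero:
  fixes f :: "real \<Rightarrow> 'h::{banach, second_countable_topology}"
  shows "(LINT x:{a}|lborel. f x) = 0"
proof -
  have "(\<lambda>x. indicator {a} x *\<^sub>R f x) = (\<lambda>x. indicator {a} x *\<^sub>R f a)"
    by (auto simp: indicator_def)
  then show ?thesis unfolding set_lebesgue_integral_def by simp
qed

lemma PT:
  fixes f :: "real \<Rightarrow> 'h::{banach, second_countable_topology}"
  assumes "set_integrable lborel {a..b} f" "a \<le> b"
  shows "(LINT x:{a..b}|lborel. f x) = (LINT x:{a<..b}|lborel. f x)"
proof -
  have eq: "{a..b} = {a} \<union> {a<..b}" using assms(2) by auto
  have i1: "set_integrable lborel {a} f" using assms(1) by (rule set_integrable_subset) (auto simp: assms(2))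
  have i2: "set_integrable lborel {a<..b} f" using assms(1) by (rule set_integrable_subset) auto
  have u: "(LINT x:({a} \<union> {a<..b})|lborel. f x) = (LINT x:{a}|lborel. f x) + (LINT x:{a<..b}|lborel. f x)"
    by (rule set_integral_Un[OF _ i1 i2]) auto
  show ?thesis using u[folded eq] by (simp add: set_int_point_zero)
qed

lemma SBL:
  fixes f :: "'a \<Rightarrow> 'b::{banach, second_countable_topology}" and L :: "'b \<Rightarrow> 'c::{banach, second_countable_topology}"
  assumes "bounded_linear L" "set_integrable M A f"
  shows "set_integrable M A (\<lambda>x. L (f x))" "(LINT x:A|M. L (f x)) = L (LINT x:A|M. f x)"
proof -
  have eq: "(\<lambda>x. indicator A x *\<^sub>R L (f x)) = (\<lambda>x. L (indicator A x *\<^sub>R f x))"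
    using linear_scale[OF bounded_linear.linear[OF assms(1)]] by auto
  show "set_integrable M A (\<lambda>x. L (f x))" using assms unfolding set_integrable_def eq
    by (rule integrable_bounded_linear)
  show "(LINT x:A|M. L (f x)) = L (LINT x:A|M. f x)" using assms
    unfolding set_lebesgue_integral_def set_integrable_def eq
    by (rule integral_bounded_linear)
qed

lemma bm_int:
  fixes g :: "real \<Rightarrow> 'h::{banach, second_countable_topology}"
  assumes "set_borel_measurable lborel {a..b} g" "\<And>s. s \<in> {a..b} \<Longrightarrow> norm (g s) \<le> B"
  shows "set_integrable lborel {a..b} g"
proof (rule set_integrable_bound[where f="\<lambda>_. B"])
  show "set_integrable lborel {a..b} (\<lambda>_. B)"
    by (rule borel_integrable_atLeastAtMost') (rule continuous_on_const)
  show "AE x in lborel. x \<in> {a..b} \<longrightarrow> norm (g x) \<le> norm B"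
    using assms(2) by (auto intro!: AE_I2 order_trans[OF _ abs_ge_self])
qed (fact assms(1))

lemma CB:
  fixes w :: "real \<Rightarrow> 'h::{banach, second_countable_topology}"
  assumes "continuous_on {a..b} w"
  shows "set_borel_measurable lborel {a..b} w"
    "set_integrable lborel {a..b} (\<lambda>x. (norm (w x))\<^sup>2)"
    "\<exists>B. \<forall>x\<in>{a..b}. norm (w x) \<le> B"
proof -
  show "set_borel_measurable lborel {a..b} w"
    unfolding set_borel_measurable_def
    using borel_measurable_continuous_on_indicator[OF _ assms] by simp
  show "set_integrable lborel {a..b} (\<lambda>x. (norm (w x))\<^sup>2)"
    by (intro borel_integrable_atLeastAtMost' continuous_intros assms)
  have "compact (w ` {a..b})" by (intro compact_continuous_image assms compact_Icc)
  from compact_imp_bounded[OF this] obtain B where "\<forall>y\<in>w ` {a..b}. norm y \<le> B"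
    unfolding bounded_iff by blast
  then show "\<exists>B. \<forall>x\<in>{a..b}. norm (w x) \<le> B" by auto
qed

lemma set_int_mono_set:
  fixes g :: "real \<Rightarrow> real"
  assumes "set_integrable lborel A g" "B \<subseteq> A" "B \<in> sets lborel" "\<And>x. x \<in> A \<Longrightarrow> 0 \<le> g x"
  shows "(LINT x:B|lborel. g x) \<le> (LINT x:A|lborel. g x)"
proof -
  have "set_integrable lborel B g" using assms set_integrable_subset by blast
  then show ?thesis using assms unfolding set_lebesgue_integral_def set_integrable_def
    by (intro integral_mono) (auto simp: indicator_def)
qed

lemma L2_L1:
  fixes f :: "real \<Rightarrow> 'h::{banach, second_countable_topology}"
  assumes "L2_on a b f"
  shows "set_integrable lborel {a..b} f"
proof (rule set_integrable_bound[where f="\<lambda>x. 1 + (norm (f x))\<^sup>2"])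
  have "set_integrable lborel {a..b} (\<lambda>_. 1::real)"
    by (rule borel_integrable_atLeastAtMost') (rule continuous_on_const)
  then show "set_integrable lborel {a..b} (\<lambda>x. 1 + (norm (f x))\<^sup>2)"
    using assms unfolding L2_on_def by (intro set_integral_add(1)) auto
  show "set_borel_measurable lborel {a..b} f" using assms unfolding L2_on_def by simp
  show "AE x in lborel. x \<in> {a..b} \<longrightarrow> norm (f x) \<le> norm (1 + (norm (f x))\<^sup>2)"
  proof (intro AE_I2 impI)
    fix x
    have "0 \<le> (norm (f x) - 1)\<^sup>2" by simp
    then have "2 * norm (f x) \<le> 1 + (norm (f x))\<^sup>2" by (simp add: power2_diff)
    then have "norm (f x) \<le> 1 + (norm (f x))\<^sup>2" using norm_ge_zero[of "f x"] by linarith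
    then show "norm (f x) \<le> norm (1 + (norm (f x))\<^sup>2)" by simp
  qed
qed

lemma int_small:
  fixes g :: "real \<Rightarrow> real"
  assumes g: "set_integrable lborel {a..b} g" and e: "e > 0"
  shows "\<exists>d>0. \<forall>t\<in>{a..b}. t - a < d \<longrightarrow> \<bar>LINT s:{a..t}|lborel. g s\<bar> < e"
proof (cases "a \<le> b")
  case True
  have gi: "g integrable_on {a..b}" using set_borel_integral_eq_integral(1)[OF g] .
  have "continuous_on {a..b} (\<lambda>x. integral {a..x} g)" by (rule indefinite_integral_continuous_1[OF gi])
  then obtain d where d: "d > 0" "\<And>t. t \<in> {a..b} \<Longrightarrow> dist t a < d \<Longrightarrow> dist (integral {a..t} g) (integral {a..a} g) < e"
    using True e unfolding continuous_on_iff by (metis atLeastAtMost_iff order_refl)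
  show ?thesis
  proof (intro exI[of _ d] conjI ballI impI)
    fix t assume t: "t \<in> {a..b}" "t - a < d"
    have "set_integrable lborel {a..t} g" by (rule set_integrable_subset[OF g]) (use t in auto)
    then have "(LINT s:{a..t}|lborel. g s) = integral {a..t} g" by (rule set_borel_integral_eq_integral(2))
    then show "\<bar>LINT s:{a..t}|lborel. g s\<bar> < e" using d(2)[OF t(1)] t by (simp add: dist_real_def)
  qed (fact d)
qed (use e in auto)



lemma small_mult:
  fixes M n e a :: real
  assumes "0 \<le> M" "0 < e" "a \<le> M * n" "n < e / (M + 1)"
  shows "a < e"
proof -
  have "M * n \<le> M * (e / (M + 1))" using assms by (intro mult_left_mono) auto
  moreover have "M * (e / (M + 1)) < e" using assms by (simp add: field_simps)
  ultimately show ?thesis using assms(3) by linarith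
qed

locale sgl =
  fixes S :: "real \<Rightarrow> 'h::{banach, second_countable_topology} \<Rightarrow> 'h" and T M :: real
  assumes lin: "\<And>r. 0 \<le> r \<Longrightarrow> bounded_linear (S r)"
    and S0: "S 0 = id"
    and semi: "\<And>t s. 0 \<le> t \<Longrightarrow> 0 \<le> s \<Longrightarrow> S (t + s) = S t \<circ> S s"
    and rc: "\<And>x. ((\<lambda>t. S t x) \<longlongrightarrow> x) (at_right 0)"
    and bnd: "\<And>r x. 0 \<le> r \<Longrightarrow> r \<le> T \<Longrightarrow> norm (S r x) \<le> M * norm x"
    and M0: "0 \<le> M" and T0: "0 \<le> T"
begin

lemma S_diff: "0 \<le> r \<Longrightarrow> S r (x - y) = S r x - S r y"
  using linear_diff[OF bounded_linear.linear[OF lin]] by blast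
lemma S_add: "0 \<le> r \<Longrightarrow> S r (x + y) = S r x + S r y"
  using linear_add[OF bounded_linear.linear[OF lin]] by blast
lemma S_zero: "0 \<le> r \<Longrightarrow> S r 0 = 0"
  using linear_0[OF bounded_linear.linear[OF lin]] by blast
lemma S_scale: "0 \<le> r \<Longrightarrow> S r (c *\<^sub>R x) = c *\<^sub>R S r x"
  using linear_scale[OF bounded_linear.linear[OF lin]] by blast
lemma S_comp: "0 \<le> t \<Longrightarrow> 0 \<le> s \<Longrightarrow> S (t + s) x = S t (S s x)"
  using semi by auto

lemma rc_eps:
  assumes "e > 0"
  shows "\<exists>d>0. \<forall>h. 0 \<le> h \<longrightarrow> h < d \<longrightarrow> norm (S h x - x) < e"
proof -
  from rc[of x] have "\<forall>\<^sub>F t in at_right 0. dist (S t x) x < e" using assms by (rule tendstoD)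
  then obtain d where d: "d > 0" "\<And>t. 0 < t \<Longrightarrow> t < d \<Longrightarrow> dist (S t x) x < e"
    by (auto simp: eventually_at_right_field)
  show ?thesis
  proof (intro exI[of _ d] conjI allI impI)
    fix h :: real assume h: "0 \<le> h" "h < d"
    show "norm (S h x - x) < e"
    proof (cases "h = 0")
      case True then show ?thesis using assms by (simp add: S0)
    next
      case False then show ?thesis using d(2)[of h] h by (simp add: dist_norm)
    qed
  qed (fact d)
qed

lemma scont:
  assumes r0: "r0 \<in> {0..T}" and e: "e > 0"
  shows "\<exists>d>0. \<forall>r\<in>{0..T}. \<bar>r - r0\<bar> < d \<longrightarrow> norm (S r x - S r0 x) < e"
proof -
  have "e / (M + 1) > 0" using e M0 by simp
  then obtain d where d: "d > 0" "\<And>h. 0 \<le> h \<Longrightarrow> h < d \<Longrightarrow> norm (S h x - x) < e / (M + 1)"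
    using rc_eps by blast
  show ?thesis
  proof (intro exI[of _ d] conjI ballI impI)
    fix r assume r: "r \<in> {0..T}" "\<bar>r - r0\<bar> < d"
    show "norm (S r x - S r0 x) < e"
    proof (cases "r0 \<le> r")
      case True
      have "S r x = S r0 (S (r - r0) x)" using S_comp[of r0 "r - r0" x] True r0 by simp
      then have "S r x - S r0 x = S r0 (S (r - r0) x - x)" using r0 by (simp add: S_diff)
      then have "norm (S r x - S r0 x) \<le> M * norm (S (r - r0) x - x)" using bnd[of r0] r0 by simp
      moreover have "norm (S (r - r0) x - x) < e / (M + 1)" using d(2)[of "r - r0"] True r by simp
      ultimately show ?thesis by (rule small_mult[OF M0 e])
    next
      case False
      have "S r0 x = S r (S (r0 - r) x)" using S_comp[of r "r0 - r" x] False r by simp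
      then have "S r x - S r0 x = S r (x - S (r0 - r) x)" using r by (simp add: S_diff)
      then have "norm (S r x - S r0 x) \<le> M * norm (S (r0 - r) x - x)"
        using bnd[of r "x - S (r0 - r) x"] r by (simp add: norm_minus_commute)
      moreover have "norm (S (r0 - r) x - x) < e / (M + 1)" using d(2)[of "r0 - r"] False r by simp
      ultimately show ?thesis by (rule small_mult[OF M0 e])
    qed
  qed (fact d)
qed

definition cl :: "real \<Rightarrow> real" where "cl r = max 0 (min T r)"

lemma cl_in: "cl r \<in> {0..T}" using T0 by (auto simp: cl_def)
lemma cl_id: "r \<in> {0..T} \<Longrightarrow> cl r = r" by (auto simp: cl_def)
lemma cl_lip: "\<bar>cl r - cl r0\<bar> \<le> \<bar>r - r0\<bar>" by (auto simp: cl_def)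

lemma joint_cont: "continuous_on UNIV (\<lambda>p. S (cl (fst p)) (snd p))"
  unfolding continuous_on_iff
proof (intro ballI allI impI)
  fix p :: "real \<times> 'h" and e :: real assume e: "e > 0"
  obtain r0 x0 where p: "p = (r0, x0)" by (cases p)
  obtain d where d: "d > 0" "\<And>r. r \<in> {0..T} \<Longrightarrow> \<bar>r - cl r0\<bar> < d \<Longrightarrow> norm (S r x0 - S (cl r0) x0) < e / 2"
    using scont[OF cl_in, of "e/2" r0 x0] e by auto
  have d2: "e / (2 * (M + 1)) > 0" using e M0 by simp
  show "\<exists>d>0. \<forall>p'\<in>UNIV. dist p' p < d \<longrightarrow> dist (S (cl (fst p')) (snd p')) (S (cl (fst p)) (snd p)) < e"
  proof (intro exI[of _ "min d (e / (2 * (M + 1)))"] conjI ballI impI)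
    show "min d (e / (2 * (M + 1))) > 0" using d(1) d2 by simp
    fix p' assume p'd: "dist p' p < min d (e / (2 * (M + 1)))"
    obtain r x where p': "p' = (r, x)" by (cases p')
    have "dist r r0 < d" using p'd dist_fst_le[of p' p] p p' by simp
    then have "\<bar>cl r - cl r0\<bar> < d" using cl_lip[of r r0] by (simp add: dist_real_def)
    then have n1: "norm (S (cl r) x0 - S (cl r0) x0) < e / 2" using d(2)[OF cl_in] by simp
    have "dist x x0 < e / (2 * (M + 1))" using p'd dist_snd_le[of p' p] p p' by simp
    then have "norm (x - x0) < (e / 2) / (M + 1)" by (simp add: dist_norm)
    moreover have "norm (S (cl r) (x - x0)) \<le> M * norm (x - x0)" using bnd cl_in by auto
    ultimately have n2: "norm (S (cl r) (x - x0)) < e / 2"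
      using small_mult[OF M0, of "e/2"] e by auto
    have eqn: "S (cl r) x - S (cl r0) x0 = S (cl r) (x - x0) + (S (cl r) x0 - S (cl r0) x0)"
      using cl_in[of r] by (simp add: S_diff)
    have "norm (S (cl r) x - S (cl r0) x0) \<le> norm (S (cl r) (x - x0)) + norm (S (cl r) x0 - S (cl r0) x0)"
      unfolding eqn by (rule norm_triangle_ineq)
    then show "dist (S (cl (fst p')) (snd p')) (S (cl (fst p)) (snd p)) < e"
      using n1 n2 p p' by (simp add: dist_norm)
  qed
qed

lemma meas_comp:
  assumes "f \<in> borel_measurable lborel"
  shows "(\<lambda>s. S (cl (t - s)) (f s)) \<in> borel_measurable lborel"
proof -
  have c: "(\<lambda>p. S (cl (fst p)) (snd p)) \<in> borel_measurable (borel \<Otimes>\<^sub>M borel)"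
    using borel_measurable_continuous_onI[OF joint_cont] by (simp add: borel_prod)
  have "(\<lambda>s. (t - s, f s)) \<in> measurable lborel (borel \<Otimes>\<^sub>M borel)"
    using assms by (intro measurable_Pair) auto
  from measurable_compose[OF this c] show ?thesis by simp
qed

lemma IL:
  assumes fi: "set_integrable lborel {a..t} f" and a0: "0 \<le> a" and tT: "t \<le> T"
  shows "set_integrable lborel {a..t} (\<lambda>s. S (t - s) (f s))"
    and "norm (LINT s:{a..t}|lborel. S (t - s) (f s)) \<le> M * (LINT s:{a..t}|lborel. norm (f s))"
proof -
  have gm: "(\<lambda>s. indicator {a..t} s *\<^sub>R f s) \<in> borel_measurable lborel"
    using fi unfolding set_integrable_def by (rule borel_measurable_integrable)
  have eq: "(\<lambda>s. indicator {a..t} s *\<^sub>R S (t - s) (f s)) = (\<lambda>s. S (cl (t - s)) (indicator {a..t} s *\<^sub>R f s))"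
  proof
    fix s show "indicator {a..t} s *\<^sub>R S (t - s) (f s) = S (cl (t - s)) (indicator {a..t} s *\<^sub>R f s)"
    proof (cases "s \<in> {a..t}")
      case True
      then have "cl (t - s) = t - s" using a0 tT by (intro cl_id) auto
      then show ?thesis using True by simp
    next
      case False then show ?thesis using cl_in by (simp add: S_zero)
    qed
  qed
  have m: "set_borel_measurable lborel {a..t} (\<lambda>s. S (t - s) (f s))"
    unfolding set_borel_measurable_def eq by (rule meas_comp[OF gm])
  have bi: "set_integrable lborel {a..t} (\<lambda>s. M * norm (f s))"
    using set_integrable_norm[OF fi] by (rule set_integrable_mult_right)
  have pb: "norm (S (t - s) (f s)) \<le> M * norm (f s)" if "s \<in> {a..t}" for s
    using bnd[of "t - s" "f s"] that a0 tT by auto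
  show i: "set_integrable lborel {a..t} (\<lambda>s. S (t - s) (f s))"
  proof (rule set_integrable_bound[OF bi m])
    show "AE s in lborel. s \<in> {a..t} \<longrightarrow> norm (S (t - s) (f s)) \<le> norm (M * norm (f s))"
    proof (intro AE_I2 impI)
      fix s assume s: "s \<in> {a..t}"
      have "norm (M * norm (f s)) = M * norm (f s)" using M0 by simp
      then show "norm (S (t - s) (f s)) \<le> norm (M * norm (f s))" using pb[OF s] by simp
    qed
  qed
  have "norm (LINT s:{a..t}|lborel. S (t - s) (f s)) \<le> (LINT s:{a..t}|lborel. norm (S (t - s) (f s)))"
    by (rule set_integral_norm_bound[OF i])
  also have "\<dots> \<le> (LINT s:{a..t}|lborel. M * norm (f s))"
    by (rule set_integral_mono[OF set_integrable_norm[OF i] bi pb])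
  also have "\<dots> = M * (LINT s:{a..t}|lborel. norm (f s))" by simp
  finally show "norm (LINT s:{a..t}|lborel. S (t - s) (f s)) \<le> M * (LINT s:{a..t}|lborel. norm (f s))" .
qed

lemma split:
  assumes hi: "set_integrable lborel {a..t} h" and "0 \<le> a" "a \<le> c" "c \<le> t" "t \<le> T"
  shows "(LINT s:{a..t}|lborel. S (t - s) (h s)) =
         S (t - c) (LINT s:{a..c}|lborel. S (c - s) (h s)) + (LINT s:{c..t}|lborel. S (t - s) (h s))"
proof -
  have i: "set_integrable lborel {a..t} (\<lambda>s. S (t - s) (h s))" using IL(1)[OF hi] assms by auto
  have eq: "{a..t} = {a..c} \<union> {c<..t}" using assms by auto
  have i1: "set_integrable lborel {a..c} (\<lambda>s. S (t - s) (h s))" by (rule set_integrable_subset[OF i]) (use assms in auto)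
  have i2: "set_integrable lborel {c<..t} (\<lambda>s. S (t - s) (h s))" by (rule set_integrable_subset[OF i]) (use assms in auto)
  have i3: "set_integrable lborel {c..t} (\<lambda>s. S (t - s) (h s))" by (rule set_integrable_subset[OF i]) (use assms in auto)
  have u: "(LINT s:({a..c} \<union> {c<..t})|lborel. S (t - s) (h s)) = (LINT s:{a..c}|lborel. S (t - s) (h s)) + (LINT s:{c<..t}|lborel. S (t - s) (h s))"
    by (rule set_integral_Un[OF _ i1 i2]) auto
  have hc: "set_integrable lborel {a..c} h" by (rule set_integrable_subset[OF hi]) (use assms in auto)
  have ic: "set_integrable lborel {a..c} (\<lambda>s. S (c - s) (h s))" using IL(1)[OF hc] assms by auto
  have "(LINT s:{a..c}|lborel. S (t - s) (h s)) = (LINT s:{a..c}|lborel. S (t - c) (S (c - s) (h s)))"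
  proof (rule set_lebesgue_integral_cong)
    show "\<forall>x. x \<in> {a..c} \<longrightarrow> S (t - x) (h x) = S (t - c) (S (c - x) (h x))"
    proof (intro allI impI)
      fix x assume x: "x \<in> {a..c}"
      have "S ((t - c) + (c - x)) (h x) = S (t - c) (S (c - x) (h x))"
        by (rule S_comp) (use x assms in auto)
      then show "S (t - x) (h x) = S (t - c) (S (c - x) (h x))" by simp
    qed
  qed auto
  also have "\<dots> = S (t - c) (LINT s:{a..c}|lborel. S (c - s) (h s))"
    by (rule SBL(2)[OF lin ic]) (use assms in auto)
  finally have 1: "(LINT s:{a..c}|lborel. S (t - s) (h s)) = S (t - c) (LINT s:{a..c}|lborel. S (c - s) (h s))" .
  have 2: "(LINT s:{c<..t}|lborel. S (t - s) (h s)) = (LINT s:{c..t}|lborel. S (t - s) (h s))"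
    using PT[OF i3] assms by simp
  show ?thesis using u[folded eq] 1 2 by simp
qed

end



lemma shift_int:
  fixes g :: "real \<Rightarrow> real"
  assumes g: "set_integrable lborel {0..T} g" and nn: "\<And>r. r \<in> {0..T} \<Longrightarrow> 0 \<le> g r"
    and sub: "0 \<le> s - e" "s - c \<le> T"
  shows "set_integrable lborel {c..e} (\<lambda>\<sigma>. g (s - \<sigma>))"
    and "(LINT \<sigma>:{c..e}|lborel. g (s - \<sigma>)) \<le> (LINT r:{0..T}|lborel. g r)"
proof -
  define G where "G r = indicator {s-e..s-c} r * g r" for r
  have gs: "set_integrable lborel {s-e..s-c} g" by (rule set_integrable_subset[OF g]) (use sub in auto)
  then have Gi: "integrable lborel G" unfolding set_integrable_def G_def by simp
  have eq: "(\<lambda>\<sigma>. indicator {c..e} \<sigma> *\<^sub>R g (s - \<sigma>)) = (\<lambda>\<sigma>. G (s - \<sigma>))"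
    by (auto simp: G_def indicator_def fun_eq_iff)
  show "set_integrable lborel {c..e} (\<lambda>\<sigma>. g (s - \<sigma>))"
    unfolding set_integrable_def eq using lborel_integrable_real_affine[OF Gi, of "-1" s] by simp
  have "(LINT \<sigma>:{c..e}|lborel. g (s - \<sigma>)) = (\<integral>\<sigma>. G (s - \<sigma>) \<partial>lborel)"
    unfolding set_lebesgue_integral_def eq ..
  also have "\<dots> = (\<integral>r. G r \<partial>lborel)" using lborel_integral_real_affine[of "-1" G s] by simp
  also have "\<dots> = (LINT r:{s-e..s-c}|lborel. g r)" unfolding set_lebesgue_integral_def G_def by simp
  also have "\<dots> \<le> (LINT r:{0..T}|lborel. g r)" by (rule set_int_mono_set[OF g]) (use sub nn in auto)
  finally show "(LINT \<sigma>:{c..e}|lborel. g (s - \<sigma>)) \<le> (LINT r:{0..T}|lborel. g r)" .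
qed

lemma L2_K:
  fixes K :: "real \<Rightarrow> real"
  assumes "L2_on 0 T K"
  shows "set_borel_measurable lborel {0..T} K" "set_integrable lborel {0..T} (\<lambda>r. (K r)\<^sup>2)"
  using assms unfolding L2_on_def by auto

lemma amgm: fixes k n :: real shows "\<bar>k\<bar> * n \<le> (1/2) * (k\<^sup>2 + n\<^sup>2)"
proof -
  have "0 \<le> (\<bar>k\<bar> - n)\<^sup>2" by simp
  then show ?thesis by (simp add: power2_diff)
qed

lemma kprod:
  fixes K :: "real \<Rightarrow> real" and w :: "real \<Rightarrow> 'h::{banach,second_countable_topology}"
  assumes K: "L2_on 0 T K" and wm: "set_borel_measurable lborel {a..b} w"
    and w2: "set_integrable lborel {a..b} (\<lambda>\<sigma>. (norm (w \<sigma>))\<^sup>2)"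
    and ce: "{c..e} \<subseteq> {a..b}" and sub: "0 \<le> s - e" "s - c \<le> T"
  shows "set_integrable lborel {c..e} (\<lambda>\<sigma>. K (s - \<sigma>) *\<^sub>R w \<sigma>)"
    and "norm (LINT \<sigma>:{c..e}|lborel. K (s - \<sigma>) *\<^sub>R w \<sigma>) \<le> (1/2) * ((LINT r:{0..T}|lborel. (K r)\<^sup>2) + (LINT \<sigma>:{a..b}|lborel. (norm (w \<sigma>))\<^sup>2))"
proof -
  have Km: "(\<lambda>r. indicator {0..T} r *\<^sub>R K r) \<in> borel_measurable lborel"
    using L2_K(1)[OF K] unfolding set_borel_measurable_def .
  have K2: "set_integrable lborel {0..T} (\<lambda>r. (K r)\<^sup>2)" using L2_K(2)[OF K] .
  have wm': "(\<lambda>\<sigma>. indicator {a..b} \<sigma> *\<^sub>R w \<sigma>) \<in> borel_measurable lborel"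
    using wm unfolding set_borel_measurable_def .
  have eq: "(\<lambda>\<sigma>. indicator {c..e} \<sigma> *\<^sub>R (K (s - \<sigma>) *\<^sub>R w \<sigma>)) =
     (\<lambda>\<sigma>. indicator {c..e} \<sigma> *\<^sub>R ((indicator {0..T} (s - \<sigma>) *\<^sub>R K (s - \<sigma>)) *\<^sub>R (indicator {a..b} \<sigma> *\<^sub>R w \<sigma>)))"
  proof
    fix \<sigma> show "indicator {c..e} \<sigma> *\<^sub>R (K (s - \<sigma>) *\<^sub>R w \<sigma>) =
      indicator {c..e} \<sigma> *\<^sub>R ((indicator {0..T} (s - \<sigma>) *\<^sub>R K (s - \<sigma>)) *\<^sub>R (indicator {a..b} \<sigma> *\<^sub>R w \<sigma>))"
    proof (cases "\<sigma> \<in> {c..e}")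
      case True
      then have "\<sigma> \<in> {a..b}" "s - \<sigma> \<in> {0..T}" using ce sub by auto
      then show ?thesis using True by simp
    qed simp
  qed
  have Kc: "(\<lambda>\<sigma>. indicator {0..T} (s - \<sigma>) *\<^sub>R K (s - \<sigma>)) \<in> borel_measurable lborel"
    using measurable_compose[OF _ Km, of "\<lambda>\<sigma>. s - \<sigma>" lborel] by simp
  have m: "set_borel_measurable lborel {c..e} (\<lambda>\<sigma>. K (s - \<sigma>) *\<^sub>R w \<sigma>)"
    unfolding set_borel_measurable_def eq
    by (intro borel_measurable_scaleR Kc wm' borel_measurable_indicator) auto
  have Ki: "set_integrable lborel {c..e} (\<lambda>\<sigma>. (K (s - \<sigma>))\<^sup>2)"
    by (rule shift_int(1)[OF K2 _ sub]) simp
  have Kb: "(LINT \<sigma>:{c..e}|lborel. (K (s - \<sigma>))\<^sup>2) \<le> (LINT r:{0..T}|lborel. (K r)\<^sup>2)"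
    by (rule shift_int(2)[OF K2 _ sub]) simp
  have wi: "set_integrable lborel {c..e} (\<lambda>\<sigma>. (norm (w \<sigma>))\<^sup>2)"
    by (rule set_integrable_subset[OF w2]) (use ce in auto)
  have wb: "(LINT \<sigma>:{c..e}|lborel. (norm (w \<sigma>))\<^sup>2) \<le> (LINT \<sigma>:{a..b}|lborel. (norm (w \<sigma>))\<^sup>2)"
    by (rule set_int_mono_set[OF w2 ce]) auto
  have bs: "set_integrable lborel {c..e} (\<lambda>\<sigma>. (K (s - \<sigma>))\<^sup>2 + (norm (w \<sigma>))\<^sup>2)"
    using Ki wi by (rule set_integral_add(1))
  have bi: "set_integrable lborel {c..e} (\<lambda>\<sigma>. (1/2) * ((K (s - \<sigma>))\<^sup>2 + (norm (w \<sigma>))\<^sup>2))"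
    using bs by (rule set_integrable_mult_right)
  have pb: "norm (K (s - \<sigma>) *\<^sub>R w \<sigma>) \<le> (1/2) * ((K (s - \<sigma>))\<^sup>2 + (norm (w \<sigma>))\<^sup>2)" for \<sigma>
    using amgm[of "K (s - \<sigma>)" "norm (w \<sigma>)"] by simp
  show i: "set_integrable lborel {c..e} (\<lambda>\<sigma>. K (s - \<sigma>) *\<^sub>R w \<sigma>)"
  proof (rule set_integrable_bound[OF bi m])
    show "AE x in lborel. x \<in> {c..e} \<longrightarrow> norm (K (s - x) *\<^sub>R w x) \<le> norm ((1/2) * ((K (s - x))\<^sup>2 + (norm (w x))\<^sup>2))"
    proof (intro AE_I2 impI)
      fix x
      have "norm ((1/2) * ((K (s - x))\<^sup>2 + (norm (w x))\<^sup>2)) = (1/2) * ((K (s - x))\<^sup>2 + (norm (w x))\<^sup>2)" by simp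
      then show "norm (K (s - x) *\<^sub>R w x) \<le> norm ((1/2) * ((K (s - x))\<^sup>2 + (norm (w x))\<^sup>2))" using pb[of x] by simp
    qed
  qed
  have "norm (LINT \<sigma>:{c..e}|lborel. K (s - \<sigma>) *\<^sub>R w \<sigma>) \<le> (LINT \<sigma>:{c..e}|lborel. norm (K (s - \<sigma>) *\<^sub>R w \<sigma>))"
    by (rule set_integral_norm_bound[OF i])
  also have "\<dots> \<le> (LINT \<sigma>:{c..e}|lborel. (1/2) * ((K (s - \<sigma>))\<^sup>2 + (norm (w \<sigma>))\<^sup>2))"
    by (rule set_integral_mono[OF set_integrable_norm[OF i] bi pb])
  also have "\<dots> = (1/2) * ((LINT \<sigma>:{c..e}|lborel. (K (s - \<sigma>))\<^sup>2) + (LINT \<sigma>:{c..e}|lborel. (norm (w \<sigma>))\<^sup>2))"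
    using set_integral_add(2)[OF Ki wi] by simp
  also have "\<dots> \<le> (1/2) * ((LINT r:{0..T}|lborel. (K r)\<^sup>2) + (LINT \<sigma>:{a..b}|lborel. (norm (w \<sigma>))\<^sup>2))"
    using Kb wb by simp
  finally show "norm (LINT \<sigma>:{c..e}|lborel. K (s - \<sigma>) *\<^sub>R w \<sigma>) \<le> (1/2) * ((LINT r:{0..T}|lborel. (K r)\<^sup>2) + (LINT \<sigma>:{a..b}|lborel. (norm (w \<sigma>))\<^sup>2))" .
qed

lemma pint_meas:
  fixes K :: "real \<Rightarrow> real" and w :: "real \<Rightarrow> 'h::{banach,second_countable_topology}"
  assumes Km: "set_borel_measurable lborel {0..T} K" and wm: "set_borel_measurable lborel {a..b} w" and a0: "0 \<le> a"
  shows "\<exists>G \<in> borel_measurable lborel. \<forall>s. s \<le> T \<longrightarrow> G s = (LINT \<sigma>:{a..min b s}|lborel. K (s - \<sigma>) *\<^sub>R w \<sigma>)"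
proof -
  define Kt where "Kt r = indicator {0..T} r *\<^sub>R K r" for r
  define wt where "wt \<sigma> = indicator {a..b} \<sigma> *\<^sub>R w \<sigma>" for \<sigma>
  have Ktm[measurable]: "Kt \<in> borel_measurable borel"
    using Km unfolding set_borel_measurable_def Kt_def by simp
  have wtm[measurable]: "wt \<in> borel_measurable borel"
    using wm unfolding set_borel_measurable_def wt_def by simp
  define F where "F s \<sigma> = (if a \<le> \<sigma> \<and> \<sigma> \<le> b \<and> \<sigma> \<le> s then Kt (s - \<sigma>) *\<^sub>R wt \<sigma> else 0)" for s \<sigma>
  have Fm: "(\<lambda>(s, \<sigma>). F s \<sigma>) \<in> borel_measurable (lborel \<Otimes>\<^sub>M lborel)"
    unfolding F_def by measurable
  define G where "G s = (\<integral>\<sigma>. F s \<sigma> \<partial>lborel)" for s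
  have "G \<in> borel_measurable lborel" unfolding G_def by (rule lborel.borel_measurable_lebesgue_integral[OF Fm])
  moreover have "\<forall>s. s \<le> T \<longrightarrow> G s = (LINT \<sigma>:{a..min b s}|lborel. K (s - \<sigma>) *\<^sub>R w \<sigma>)"
  proof (intro allI impI)
    fix s assume s: "s \<le> T"
    have "(\<lambda>\<sigma>. indicator {a..min b s} \<sigma> *\<^sub>R (K (s - \<sigma>) *\<^sub>R w \<sigma>)) = F s"
    proof
      fix \<sigma> show "indicator {a..min b s} \<sigma> *\<^sub>R (K (s - \<sigma>) *\<^sub>R w \<sigma>) = F s \<sigma>"
        using s a0 by (auto simp: F_def Kt_def wt_def indicator_def)
    qed
    then show "G s = (LINT \<sigma>:{a..min b s}|lborel. K (s - \<sigma>) *\<^sub>R w \<sigma>)"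
      unfolding G_def set_lebesgue_integral_def by simp
  qed
  ultimately show ?thesis by blast
qed

lemma KINT:
  fixes K :: "real \<Rightarrow> real" and w :: "real \<Rightarrow> 'h::{banach,second_countable_topology}"
  assumes K: "L2_on 0 T K" and wm: "set_borel_measurable lborel {a..b} w"
    and w2: "set_integrable lborel {a..b} (\<lambda>\<sigma>. (norm (w \<sigma>))\<^sup>2)" and a0: "0 \<le> a" and hi: "hi \<le> T"
  shows "set_integrable lborel {lo..hi} (\<lambda>s. LINT \<sigma>:{a..min b s}|lborel. K (s - \<sigma>) *\<^sub>R w \<sigma>)"
proof -
  obtain G where G: "G \<in> borel_measurable lborel" "\<forall>s. s \<le> T \<longrightarrow> G s = (LINT \<sigma>:{a..min b s}|lborel. K (s - \<sigma>) *\<^sub>R w \<sigma>)"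
    using pint_meas[OF L2_K(1)[OF K] wm a0] by blast
  have eq: "(\<lambda>s. indicator {lo..hi} s *\<^sub>R (LINT \<sigma>:{a..min b s}|lborel. K (s - \<sigma>) *\<^sub>R w \<sigma>)) = (\<lambda>s. indicator {lo..hi} s *\<^sub>R G s)"
  proof
    fix s show "indicator {lo..hi} s *\<^sub>R (LINT \<sigma>:{a..min b s}|lborel. K (s - \<sigma>) *\<^sub>R w \<sigma>) = indicator {lo..hi} s *\<^sub>R G s"
      using G(2) hi by (cases "s \<in> {lo..hi}") auto
  qed
  have m: "set_borel_measurable lborel {lo..hi} (\<lambda>s. LINT \<sigma>:{a..min b s}|lborel. K (s - \<sigma>) *\<^sub>R w \<sigma>)"
    unfolding set_borel_measurable_def eq using G(1) by (intro borel_measurable_scaleR borel_measurable_indicator) auto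
  show ?thesis
  proof (rule bm_int[OF m])
    fix s assume s: "s \<in> {lo..hi}"
    show "norm (LINT \<sigma>:{a..min b s}|lborel. K (s - \<sigma>) *\<^sub>R w \<sigma>) \<le> (1/2) * ((LINT r:{0..T}|lborel. (K r)\<^sup>2) + (LINT \<sigma>:{a..b}|lborel. (norm (w \<sigma>))\<^sup>2))"
      by (rule kprod(2)[OF K wm w2]) (use s hi a0 in auto)
  qed
qed



context sgl begin

lemma uniq:
  fixes K :: "real \<Rightarrow> real"
  assumes K: "L2_on 0 T K" and dc: "continuous_on {a..T} d" and a0: "0 \<le> a" and aT: "a < T"
   and ae: "AE t in lborel. t \<in> {a..T} \<longrightarrow> d t = (LINT s:{a..t}|lborel. S (t - s) (LINT \<sigma>:{a..s}|lborel. K (s - \<sigma>) *\<^sub>R d \<sigma>))"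
  shows "\<forall>t\<in>{a..T}. d t = 0"
proof -
  define D where "D s = (LINT \<sigma>:{a..s}|lborel. K (s - \<sigma>) *\<^sub>R d \<sigma>)" for s
  have KA: "set_integrable lborel {0..T} (\<lambda>r. \<bar>K r\<bar>)"
    using set_integrable_norm[OF L2_L1[OF K]] by simp
  define L where "L = (LINT r:{0..T}|lborel. \<bar>K r\<bar>)"
  have L0: "0 \<le> L" unfolding L_def set_lebesgue_integral_def by (intro integral_nonneg_AE) auto
  have dm: "set_borel_measurable lborel {a..T} d" and d2: "set_integrable lborel {a..T} (\<lambda>x. (norm (d x))\<^sup>2)"
    using CB[OF dc] by auto
  have Dbound: "norm (D s) \<le> m * L" if s: "s \<in> {a..T}" and mb: "\<forall>\<sigma>\<in>{a..s}. norm (d \<sigma>) \<le> m" for s m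
  proof -
    have m0: "0 \<le> m" using mb s by (meson atLeastAtMost_iff norm_ge_zero order_trans order_refl)
    have i: "set_integrable lborel {a..s} (\<lambda>\<sigma>. K (s - \<sigma>) *\<^sub>R d \<sigma>)"
      by (rule kprod(1)[OF K dm d2]) (use s a0 in auto)
    have ka: "set_integrable lborel {a..s} (\<lambda>\<sigma>. \<bar>K (s - \<sigma>)\<bar>)"
      by (rule shift_int(1)[OF KA]) (use s a0 in auto)
    have kb: "(LINT \<sigma>:{a..s}|lborel. \<bar>K (s - \<sigma>)\<bar>) \<le> L"
      unfolding L_def by (rule shift_int(2)[OF KA]) (use s a0 in auto)
    have "norm (D s) \<le> (LINT \<sigma>:{a..s}|lborel. norm (K (s - \<sigma>) *\<^sub>R d \<sigma>))"
      unfolding D_def by (rule set_integral_norm_bound[OF i])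
    also have "\<dots> \<le> (LINT \<sigma>:{a..s}|lborel. m * \<bar>K (s - \<sigma>)\<bar>)"
    proof (rule set_integral_mono[OF set_integrable_norm[OF i] set_integrable_mult_right[OF ka]])
      fix \<sigma> assume "\<sigma> \<in> {a..s}"
      then have "norm (d \<sigma>) \<le> m" using mb by auto
      then show "norm (K (s - \<sigma>) *\<^sub>R d \<sigma>) \<le> m * \<bar>K (s - \<sigma>)\<bar>"
        using mult_right_mono[of "norm (d \<sigma>)" m "\<bar>K (s - \<sigma>)\<bar>"] by (simp add: mult.commute)
    qed
    also have "\<dots> = m * (LINT \<sigma>:{a..s}|lborel. \<bar>K (s - \<sigma>)\<bar>)" by simp
    also have "\<dots> \<le> m * L" using kb m0 by (rule mult_left_mono)
    finally show ?thesis .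
  qed
  have DI: "set_integrable lborel {a..T} D"
  proof -
    have "set_integrable lborel {a..T} (\<lambda>s. LINT \<sigma>:{a..min T s}|lborel. K (s - \<sigma>) *\<^sub>R d \<sigma>)"
      by (rule KINT[OF K dm d2 a0]) simp
    moreover have "\<And>s. s \<in> {a..T} \<Longrightarrow> (LINT \<sigma>:{a..min T s}|lborel. K (s - \<sigma>) *\<^sub>R d \<sigma>) = D s"
      by (simp add: D_def)
    ultimately show ?thesis by (subst set_integrable_cong[OF refl refl, of _ _ D, symmetric]) auto
  qed
  define c where "c = M * L + 1"
  have c1: "c \<ge> 1" unfolding c_def using M0 L0 by simp
  define h where "h = 1 / (2 * c)"
  have h0: "h > 0" unfolding h_def using c1 by simp
  have ML0: "0 \<le> M * L" using M0 L0 by simp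
  have "M * L * h = (M * L) / (2 * (M * L + 1))" unfolding h_def c_def by simp
  also have "\<dots> \<le> (M * L + 1) / (2 * (M * L + 1))" using ML0 by (intro divide_right_mono) auto
  also have "\<dots> = 1/2" using ML0 by simp
  finally have MLh: "M * L * h \<le> 1/2" .
  have step: "\<forall>t\<in>{a..T}. t < a + real n * h \<longrightarrow> d t = 0" for n
  proof (induction n)
    case 0 then show ?case by auto
  next
    case (Suc n)
    define a' where "a' = a + real n * h"
    define b where "b = min T (a' + h)"
    have aa': "a \<le> a'" unfolding a'_def using h0 by simp
    have ab: "a < b" unfolding b_def using aa' h0 aT by simp
    have bT: "b \<le> T" unfolding b_def by simp
    have dcb: "continuous_on {a..b} (\<lambda>t. norm (d t))"
      by (intro continuous_on_norm continuous_on_subset[OF dc]) (use bT in auto)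
    obtain tm where tm: "tm \<in> {a..b}" "\<And>t. t \<in> {a..b} \<Longrightarrow> norm (d t) \<le> norm (d tm)"
      using continuous_attains_sup[OF compact_Icc _ dcb] ab by auto
    define m where "m = norm (d tm)"
    have m0: "0 \<le> m" unfolding m_def by simp
    have Dz: "D s = 0" if "s \<in> {a..T}" "s < a'" for s
    proof -
      have "(LINT \<sigma>:{a..s}|lborel. K (s - \<sigma>) *\<^sub>R d \<sigma>) = (LINT \<sigma>:{a..s}|lborel. (0::'h))"
      proof (rule set_lebesgue_integral_cong)
        show "\<forall>x. x \<in> {a..s} \<longrightarrow> K (s - x) *\<^sub>R d x = 0"
          using Suc.IH that unfolding a'_def by auto
      qed auto
      then show ?thesis unfolding D_def by simp
    qed
    have Db: "norm (D s) \<le> m * L * indicator {a'..b} s" if s: "s \<in> {a..b}" for s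
    proof (cases "s < a'")
      case True then show ?thesis using Dz[of s] s bT by simp
    next
      case False
      then have "s \<in> {a'..b}" using s by auto
      moreover have "norm (D s) \<le> m * L"
        by (rule Dbound) (use s bT tm(2) in \<open>auto simp: m_def\<close>)
      ultimately show ?thesis by simp
    qed
    have phii: "integrable lborel (\<lambda>s. m * L * indicator {a'..b} s)"
      by (intro integrable_mult_right integrable_real_indicator) (auto simp: emeasure_lborel_Icc_eq)
    have phiint: "(\<integral>s. m * L * indicator {a'..b} s \<partial>lborel) \<le> m * L * h"
    proof -
      have "(\<integral>s. m * L * indicator {a'..b} s \<partial>lborel) = m * L * measure lborel {a'..b}" by simp
      also have "measure lborel {a'..b} \<le> h" unfolding b_def using h0 by (auto simp: measure_lborel_Icc)
      then have "m * L * measure lborel {a'..b} \<le> m * L * h" using m0 L0 by (intro mult_left_mono) auto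
      finally show ?thesis .
    qed
    have aeb: "AE t in lborel. t \<in> {a..b} \<longrightarrow> norm (d t) \<le> M * (m * L * h)"
      using ae
    proof (rule eventually_mono)
      fix t assume H: "t \<in> {a..T} \<longrightarrow> d t = (LINT s:{a..t}|lborel. S (t - s) (LINT \<sigma>:{a..s}|lborel. K (s - \<sigma>) *\<^sub>R d \<sigma>))"
      show "t \<in> {a..b} \<longrightarrow> norm (d t) \<le> M * (m * L * h)"
      proof
        assume t: "t \<in> {a..b}"
        then have dt: "d t = (LINT s:{a..t}|lborel. S (t - s) (D s))" using H bT unfolding D_def by auto
        have Dt: "set_integrable lborel {a..t} D" by (rule set_integrable_subset[OF DI]) (use t bT in auto)
        have "norm (d t) \<le> M * (LINT s:{a..t}|lborel. norm (D s))"
          unfolding dt by (rule IL(2)[OF Dt a0]) (use t bT in auto)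
        also have "(LINT s:{a..t}|lborel. norm (D s)) \<le> (LINT s:{a..t}|lborel. m * L * indicator {a'..b} s)"
        proof (rule set_integral_mono[OF set_integrable_norm[OF Dt]])
          show "set_integrable lborel {a..t} (\<lambda>s. m * L * indicator {a'..b} s)"
            unfolding set_integrable_def by (rule integrable_mult_indicator[OF _ phii]) auto
          show "\<And>s. s \<in> {a..t} \<Longrightarrow> norm (D s) \<le> m * L * indicator {a'..b} s" using Db t by auto
        qed
        also have "\<dots> \<le> (\<integral>s. m * L * indicator {a'..b} s \<partial>lborel)"
          unfolding set_lebesgue_integral_def
          by (rule integral_mono[OF integrable_mult_indicator[OF _ phii] phii]) (use m0 L0 in \<open>auto simp: indicator_def\<close>)
        also have "\<dots> \<le> m * L * h" by (rule phiint)
        finally show "norm (d t) \<le> M * (m * L * h)" using M0 by (simp add: mult_left_mono)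
      qed
    qed
    have allb: "\<forall>t\<in>{a..b}. norm (d t) \<le> M * (m * L * h)" by (rule cont_ae_le[OF dcb ab aeb])
    have "m \<le> M * (m * L * h)" using allb tm(1) unfolding m_def by auto
    also have "\<dots> = (M * L * h) * m" by simp
    also have "\<dots> \<le> (1/2) * m" using MLh m0 by (rule mult_right_mono)
    finally have "m = 0" using m0 by simp
    then have z: "\<forall>t\<in>{a..b}. d t = 0" using tm(2) unfolding m_def by (metis norm_le_zero_iff)
    show ?case
    proof (intro ballI impI)
      fix t assume t: "t \<in> {a..T}" "t < a + real (Suc n) * h"
      then have "t \<in> {a..b}" unfolding b_def a'_def by (auto simp: algebra_simps)
      then show "d t = 0" using z by auto
    qed
  qed
  show ?thesis
  proof
    fix t assume t: "t \<in> {a..T}"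
    obtain n where "t - a < real n * h" using ex_less_of_nat_mult[OF h0] by blast
    then show "d t = 0" using step[of n] t by auto
  qed
qed

end



context sgl begin

lemma comb3:
  assumes f: "set_integrable lborel {a..t} f" and g: "set_integrable lborel {a..t} g"
    and k: "set_integrable lborel {a..t} k" and a0: "0 \<le> a" and tT: "t \<le> T"
  shows "(LINT s:{a..t}|lborel. S (t - s) (f s)) + (LINT s:{a..t}|lborel. S (t - s) (g s)) + (LINT s:{a..t}|lborel. S (t - s) (k s))
       = (LINT s:{a..t}|lborel. S (t - s) (f s + g s + k s))"
proof -
  have i1: "set_integrable lborel {a..t} (\<lambda>s. S (t - s) (f s))" by (rule IL(1)[OF f a0 tT])
  have i2: "set_integrable lborel {a..t} (\<lambda>s. S (t - s) (g s))" by (rule IL(1)[OF g a0 tT])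
  have i3: "set_integrable lborel {a..t} (\<lambda>s. S (t - s) (k s))" by (rule IL(1)[OF k a0 tT])
  have "(LINT s:{a..t}|lborel. S (t - s) (f s + g s + k s)) = (LINT s:{a..t}|lborel. S (t - s) (f s) + S (t - s) (g s) + S (t - s) (k s))"
    by (rule set_lebesgue_integral_cong) (auto simp: S_add)
  also have "\<dots> = (LINT s:{a..t}|lborel. S (t - s) (f s) + S (t - s) (g s)) + (LINT s:{a..t}|lborel. S (t - s) (k s))"
    by (rule set_integral_add(2)[OF set_integral_add(1)[OF i1 i2] i3])
  also have "(LINT s:{a..t}|lborel. S (t - s) (f s) + S (t - s) (g s)) = (LINT s:{a..t}|lborel. S (t - s) (f s)) + (LINT s:{a..t}|lborel. S (t - s) (g s))"
    by (rule set_integral_add(2)[OF i1 i2])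
  finally show ?thesis by simp
qed

lemma comb_diff:
  assumes f: "set_integrable lborel {a..t} f" and g: "set_integrable lborel {a..t} g"
    and a0: "0 \<le> a" and tT: "t \<le> T"
  shows "(LINT s:{a..t}|lborel. S (t - s) (f s)) - (LINT s:{a..t}|lborel. S (t - s) (g s))
       = (LINT s:{a..t}|lborel. S (t - s) (f s - g s))"
proof -
  have i1: "set_integrable lborel {a..t} (\<lambda>s. S (t - s) (f s))" by (rule IL(1)[OF f a0 tT])
  have i2: "set_integrable lborel {a..t} (\<lambda>s. S (t - s) (g s))" by (rule IL(1)[OF g a0 tT])
  have "(LINT s:{a..t}|lborel. S (t - s) (f s - g s)) = (LINT s:{a..t}|lborel. S (t - s) (f s) - S (t - s) (g s))"
    by (rule set_lebesgue_integral_cong) (auto simp: S_diff)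
  also have "\<dots> = (LINT s:{a..t}|lborel. S (t - s) (f s)) - (LINT s:{a..t}|lborel. S (t - s) (g s))"
    by (rule set_integral_diff(2)[OF i1 i2])
  finally show ?thesis by simp
qed

end

theorem proposition3p1:
  fixes S :: "real \<Rightarrow> 'h::{real_inner, banach, second_countable_topology} \<Rightarrow> 'h"
    and B :: "'u::{real_inner, banach, second_countable_topology} \<Rightarrow> 'h"
    and K :: "real \<Rightarrow> real"
    and T C \<omega> \<tau> \<tau>1 :: real
    and \<xi>0 :: 'h and \<xi> w0 w1 :: "real \<Rightarrow> 'h" and u :: "real \<Rightarrow> 'u"
  assumes "T > 0"
    and "c0_semigroup S C \<omega>"
    and "L2_on 0 T K"
    and "bounded_linear B"
    and "\<tau> \<in> {0<..<T}"
    and "L2_on 0 \<tau> \<xi>"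
    and "L2_on \<tau> T u"
    and "mild_solution S K B T \<tau> \<xi>0 \<xi> u w0"
    and "\<tau>1 \<in> {\<tau><..<T}"
    and "mild_solution S K B T \<tau>1 (w0 \<tau>1) (\<lambda>s. if s \<le> \<tau> then \<xi> s else w0 s) u w1"
  shows "\<forall>t \<in> {\<tau>1<..<T}. w0 t = w1 t"
proof -
  note K = assms(3)
  have tau: "0 < \<tau>" "\<tau> < T" and tau1: "\<tau> < \<tau>1" "\<tau>1 < T" using assms(5,9) by auto
  have lin0: "\<And>t. 0 \<le> t \<Longrightarrow> bounded_linear (S t)" and S00: "S 0 = id"
    and semi0: "\<And>t s. 0 \<le> t \<Longrightarrow> 0 \<le> s \<Longrightarrow> S (t + s) = S t \<circ> S s"
    and rc0: "\<And>x. ((\<lambda>t. S t x) \<longlongrightarrow> x) (at_right 0)"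
    and gb: "\<And>t x. 0 \<le> t \<Longrightarrow> norm (S t x) \<le> C * exp (\<omega> * t) * norm x"
    using assms(2) unfolding c0_semigroup_def by auto
  define M where "M = \<bar>C\<bar> * exp (\<bar>\<omega>\<bar> * T)"
  have M0: "0 \<le> M" unfolding M_def by simp
  have bndM: "norm (S r x) \<le> M * norm x" if r: "0 \<le> r" "r \<le> T" for r x
  proof -
    have "\<omega> * r \<le> \<bar>\<omega>\<bar> * r" using r(1) by (intro mult_right_mono) auto
    also have "\<dots> \<le> \<bar>\<omega>\<bar> * T" using r(2) by (intro mult_left_mono) auto
    finally have "exp (\<omega> * r) \<le> exp (\<bar>\<omega>\<bar> * T)" by simp
    have "C * exp (\<omega> * r) \<le> \<bar>C\<bar> * exp (\<omega> * r)" by (intro mult_right_mono) auto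
    also have "\<dots> \<le> \<bar>C\<bar> * exp (\<bar>\<omega>\<bar> * T)" using \<open>exp (\<omega> * r) \<le> exp (\<bar>\<omega>\<bar> * T)\<close> by (intro mult_left_mono) auto
    finally have "C * exp (\<omega> * r) \<le> M" unfolding M_def .
    then have "C * exp (\<omega> * r) * norm x \<le> M * norm x" by (rule mult_right_mono) simp
    then show ?thesis using gb[OF r(1), of x] by linarith
  qed
  interpret sgl S T M
    by (rule sgl.intro) (use lin0 S00 semi0 rc0 bndM M0 assms(1) in auto)
  have ms0: "continuous_on {\<tau>..T} w0"
    and E0raw: "AE t in lborel. t \<in> {\<tau>..T} \<longrightarrow>
        w0 t = S (t - \<tau>) \<xi>0
            + (LINT s:{\<tau>..t}|lborel. S (t - s) (LINT \<sigma>:{\<tau>..s}|lborel. K (s - \<sigma>) *\<^sub>R w0 \<sigma>))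
            + (LINT s:{\<tau>..t}|lborel. S (t - s) (LINT \<sigma>:{0..\<tau>}|lborel. K (s - \<sigma>) *\<^sub>R \<xi> \<sigma>))
            + (LINT s:{\<tau>..t}|lborel. S (t - s) (B (u s)))"
    using assms(8) unfolding mild_solution_def by auto
  have ms1: "continuous_on {\<tau>1..T} w1"
    and E1raw: "AE t in lborel. t \<in> {\<tau>1..T} \<longrightarrow>
        w1 t = S (t - \<tau>1) (w0 \<tau>1)
            + (LINT s:{\<tau>1..t}|lborel. S (t - s) (LINT \<sigma>:{\<tau>1..s}|lborel. K (s - \<sigma>) *\<^sub>R w1 \<sigma>))
            + (LINT s:{\<tau>1..t}|lborel. S (t - s) (LINT \<sigma>:{0..\<tau>1}|lborel. K (s - \<sigma>) *\<^sub>R (if \<sigma> \<le> \<tau> then \<xi> \<sigma> else w0 \<sigma>)))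
            + (LINT s:{\<tau>1..t}|lborel. S (t - s) (B (u s)))"
    using assms(10) unfolding mild_solution_def by auto
  have w0m: "set_borel_measurable lborel {\<tau>..T} w0" and w02: "set_integrable lborel {\<tau>..T} (\<lambda>x. (norm (w0 x))\<^sup>2)"
    using CB[OF ms0] by auto
  have ms0': "continuous_on {\<tau>..\<tau>1} w0" by (rule continuous_on_subset[OF ms0]) (use tau1 in auto)
  have w0m': "set_borel_measurable lborel {\<tau>..\<tau>1} w0" and w02': "set_integrable lborel {\<tau>..\<tau>1} (\<lambda>x. (norm (w0 x))\<^sup>2)"
    using CB[OF ms0'] by auto
  have w1m: "set_borel_measurable lborel {\<tau>1..T} w1" and w12: "set_integrable lborel {\<tau>1..T} (\<lambda>x. (norm (w1 x))\<^sup>2)"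
    using CB[OF ms1] by auto
  have xim: "set_borel_measurable lborel {0..\<tau>} \<xi>" and xi2: "set_integrable lborel {0..\<tau>} (\<lambda>x. (norm (\<xi> x))\<^sup>2)"
    using assms(6) unfolding L2_on_def by auto
  define G0 where "G0 s = (LINT \<sigma>:{\<tau>..s}|lborel. K (s - \<sigma>) *\<^sub>R w0 \<sigma>)" for s
  define Xi where "Xi s = (LINT \<sigma>:{0..\<tau>}|lborel. K (s - \<sigma>) *\<^sub>R \<xi> \<sigma>)" for s
  define Bu where "Bu s = B (u s)" for s
  define h0 where "h0 s = G0 s + Xi s + Bu s" for s
  define G1 where "G1 s = (LINT \<sigma>:{\<tau>1..s}|lborel. K (s - \<sigma>) *\<^sub>R w1 \<sigma>)" for s
  define Y where "Y s = (LINT \<sigma>:{0..\<tau>1}|lborel. K (s - \<sigma>) *\<^sub>R (if \<sigma> \<le> \<tau> then \<xi> \<sigma> else w0 \<sigma>))" for s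
  define Z where "Z s = (LINT \<sigma>:{\<tau>..\<tau>1}|lborel. K (s - \<sigma>) *\<^sub>R w0 \<sigma>)" for s
  define h1 where "h1 s = G1 s + Y s + Bu s" for s
  define D where "D s = (LINT \<sigma>:{\<tau>1..s}|lborel. K (s - \<sigma>) *\<^sub>R (w0 \<sigma> - w1 \<sigma>))" for s
  define F where "F t = S (t - \<tau>) \<xi>0 + (LINT s:{\<tau>..t}|lborel. S (t - s) (h0 s))" for t
  have iBu: "set_integrable lborel {\<tau>..T} Bu"
    unfolding Bu_def by (rule SBL(1)[OF assms(4) L2_L1[OF assms(7)]])
  have iG0: "set_integrable lborel {\<tau>..T} G0"
  proof -
    have "set_integrable lborel {\<tau>..T} (\<lambda>s. LINT \<sigma>:{\<tau>..min T s}|lborel. K (s - \<sigma>) *\<^sub>R w0 \<sigma>)"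
      by (rule KINT[OF K w0m w02]) (use tau in auto)
    then show ?thesis by (rule set_integrable_cong[THEN iffD1, rotated -1]) (auto simp: G0_def)
  qed
  have iXi: "set_integrable lborel {\<tau>..T} Xi"
  proof -
    have "set_integrable lborel {\<tau>..T} (\<lambda>s. LINT \<sigma>:{0..min \<tau> s}|lborel. K (s - \<sigma>) *\<^sub>R \<xi> \<sigma>)"
      by (rule KINT[OF K xim xi2]) auto
    then show ?thesis by (rule set_integrable_cong[THEN iffD1, rotated -1]) (auto simp: Xi_def min_def)
  qed
  have ih0: "set_integrable lborel {\<tau>..T} h0"
    unfolding h0_def by (rule set_integral_add(1)[OF set_integral_add(1)[OF iG0 iXi] iBu])
  have iG1: "set_integrable lborel {\<tau>1..T} G1"
  proof -
    have "set_integrable lborel {\<tau>1..T} (\<lambda>s. LINT \<sigma>:{\<tau>1..min T s}|lborel. K (s - \<sigma>) *\<^sub>R w1 \<sigma>)"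
      by (rule KINT[OF K w1m w12]) (use tau tau1 in auto)
    then show ?thesis by (rule set_integrable_cong[THEN iffD1, rotated -1]) (auto simp: G1_def)
  qed
  have iZ: "set_integrable lborel {\<tau>1..T} Z"
  proof -
    have "set_integrable lborel {\<tau>1..T} (\<lambda>s. LINT \<sigma>:{\<tau>..min \<tau>1 s}|lborel. K (s - \<sigma>) *\<^sub>R w0 \<sigma>)"
      by (rule KINT[OF K w0m' w02']) (use tau in auto)
    then show ?thesis by (rule set_integrable_cong[THEN iffD1, rotated -1]) (auto simp: Z_def min_def)
  qed
  have sub1: "{\<tau>1..T} \<subseteq> {\<tau>..T}" using tau1 by auto
  have iXi1: "set_integrable lborel {\<tau>1..T} Xi" by (rule set_integrable_subset[OF iXi _ sub1]) auto
  have iBu1: "set_integrable lborel {\<tau>1..T} Bu" by (rule set_integrable_subset[OF iBu _ sub1]) auto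
  have ih01: "set_integrable lborel {\<tau>1..T} h0" by (rule set_integrable_subset[OF ih0 _ sub1]) auto
  have Yeq: "Y s = Xi s + Z s" if s: "s \<in> {\<tau>1..T}" for s
  proof -
    let ?f = "\<lambda>\<sigma>. K (s - \<sigma>) *\<^sub>R (if \<sigma> \<le> \<tau> then \<xi> \<sigma> else w0 \<sigma>)"
    have kx: "set_integrable lborel {0..\<tau>} (\<lambda>\<sigma>. K (s - \<sigma>) *\<^sub>R \<xi> \<sigma>)"
      by (rule kprod(1)[OF K xim xi2]) (use s tau tau1 in auto)
    have kw: "set_integrable lborel {\<tau>..\<tau>1} (\<lambda>\<sigma>. K (s - \<sigma>) *\<^sub>R w0 \<sigma>)"
      by (rule kprod(1)[OF K w0m' w02']) (use s tau tau1 in auto)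
    have kw': "set_integrable lborel {\<tau><..\<tau>1} (\<lambda>\<sigma>. K (s - \<sigma>) *\<^sub>R w0 \<sigma>)"
      by (rule set_integrable_subset[OF kw]) auto
    have i1: "set_integrable lborel {0..\<tau>} ?f"
      using kx by (rule set_integrable_cong[THEN iffD1, rotated -1]) auto
    have i2: "set_integrable lborel {\<tau><..\<tau>1} ?f"
      using kw' by (rule set_integrable_cong[THEN iffD1, rotated -1]) auto
    have eq: "{0..\<tau>1} = {0..\<tau>} \<union> {\<tau><..\<tau>1}" using tau tau1 by auto
    have u: "(LINT \<sigma>:({0..\<tau>} \<union> {\<tau><..\<tau>1})|lborel. ?f \<sigma>) = (LINT \<sigma>:{0..\<tau>}|lborel. ?f \<sigma>) + (LINT \<sigma>:{\<tau><..\<tau>1}|lborel. ?f \<sigma>)"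
      by (rule set_integral_Un[OF _ i1 i2]) auto
    have c1: "(LINT \<sigma>:{0..\<tau>}|lborel. ?f \<sigma>) = Xi s"
      unfolding Xi_def by (rule set_lebesgue_integral_cong) auto
    have c2: "(LINT \<sigma>:{\<tau><..\<tau>1}|lborel. ?f \<sigma>) = (LINT \<sigma>:{\<tau><..\<tau>1}|lborel. K (s - \<sigma>) *\<^sub>R w0 \<sigma>)"
      by (rule set_lebesgue_integral_cong) auto
    have c3: "(LINT \<sigma>:{\<tau>..\<tau>1}|lborel. K (s - \<sigma>) *\<^sub>R w0 \<sigma>) = (LINT \<sigma>:{\<tau><..\<tau>1}|lborel. K (s - \<sigma>) *\<^sub>R w0 \<sigma>)"
      by (rule PT[OF kw]) (use tau1 in auto)
    show ?thesis using u[folded eq] c1 c2 c3 unfolding Y_def Z_def by simp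
  qed
  have iY: "set_integrable lborel {\<tau>1..T} Y"
    using set_integral_add(1)[OF iXi1 iZ] by (rule set_integrable_cong[THEN iffD1, rotated -1]) (auto simp: Yeq)
  have ih1: "set_integrable lborel {\<tau>1..T} h1"
    unfolding h1_def by (rule set_integral_add(1)[OF set_integral_add(1)[OF iG1 iY] iBu1])
  have Deq: "h0 s - h1 s = D s" if s: "s \<in> {\<tau>1..T}" for s
  proof -
    have kw: "set_integrable lborel {\<tau>..s} (\<lambda>\<sigma>. K (s - \<sigma>) *\<^sub>R w0 \<sigma>)"
      by (rule kprod(1)[OF K w0m w02]) (use s tau tau1 in auto)
    have kw1: "set_integrable lborel {\<tau>..\<tau>1} (\<lambda>\<sigma>. K (s - \<sigma>) *\<^sub>R w0 \<sigma>)"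
      by (rule set_integrable_subset[OF kw]) (use s in auto)
    have kw2: "set_integrable lborel {\<tau>1<..s} (\<lambda>\<sigma>. K (s - \<sigma>) *\<^sub>R w0 \<sigma>)"
      by (rule set_integrable_subset[OF kw]) (use tau1 in auto)
    have kw3: "set_integrable lborel {\<tau>1..s} (\<lambda>\<sigma>. K (s - \<sigma>) *\<^sub>R w0 \<sigma>)"
      by (rule set_integrable_subset[OF kw]) (use tau1 in auto)
    have kv: "set_integrable lborel {\<tau>1..s} (\<lambda>\<sigma>. K (s - \<sigma>) *\<^sub>R w1 \<sigma>)"
      by (rule kprod(1)[OF K w1m w12]) (use s tau tau1 in auto)
    have eq: "{\<tau>..s} = {\<tau>..\<tau>1} \<union> {\<tau>1<..s}" using s tau1 by auto
    have u: "(LINT \<sigma>:({\<tau>..\<tau>1} \<union> {\<tau>1<..s})|lborel. K (s - \<sigma>) *\<^sub>R w0 \<sigma>) = (LINT \<sigma>:{\<tau>..\<tau>1}|lborel. K (s - \<sigma>) *\<^sub>R w0 \<sigma>) + (LINT \<sigma>:{\<tau>1<..s}|lborel. K (s - \<sigma>) *\<^sub>R w0 \<sigma>)"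
      by (rule set_integral_Un[OF _ kw1 kw2]) auto
    have c3: "(LINT \<sigma>:{\<tau>1..s}|lborel. K (s - \<sigma>) *\<^sub>R w0 \<sigma>) = (LINT \<sigma>:{\<tau>1<..s}|lborel. K (s - \<sigma>) *\<^sub>R w0 \<sigma>)"
      by (rule PT[OF kw3]) (use s in auto)
    have G0s: "G0 s = Z s + (LINT \<sigma>:{\<tau>1..s}|lborel. K (s - \<sigma>) *\<^sub>R w0 \<sigma>)"
      using u[folded eq] c3 unfolding G0_def Z_def by simp
    have Ds: "D s = (LINT \<sigma>:{\<tau>1..s}|lborel. K (s - \<sigma>) *\<^sub>R w0 \<sigma>) - G1 s"
      unfolding D_def G1_def using set_integral_diff(2)[OF kw3 kv] by (simp add: scaleR_diff_right)
    show ?thesis unfolding h0_def h1_def using G0s Ds Yeq[OF s] by simp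
  qed
  have E0: "AE t in lborel. t \<in> {\<tau>..T} \<longrightarrow> w0 t = F t"
    using E0raw
  proof (rule eventually_mono)
    fix t assume H: "t \<in> {\<tau>..T} \<longrightarrow>
        w0 t = S (t - \<tau>) \<xi>0
            + (LINT s:{\<tau>..t}|lborel. S (t - s) (LINT \<sigma>:{\<tau>..s}|lborel. K (s - \<sigma>) *\<^sub>R w0 \<sigma>))
            + (LINT s:{\<tau>..t}|lborel. S (t - s) (LINT \<sigma>:{0..\<tau>}|lborel. K (s - \<sigma>) *\<^sub>R \<xi> \<sigma>))
            + (LINT s:{\<tau>..t}|lborel. S (t - s) (B (u s)))"
    show "t \<in> {\<tau>..T} \<longrightarrow> w0 t = F t"
    proof
      assume t: "t \<in> {\<tau>..T}"
      have w: "w0 t = S (t - \<tau>) \<xi>0 + ((LINT s:{\<tau>..t}|lborel. S (t - s) (G0 s)) + (LINT s:{\<tau>..t}|lborel. S (t - s) (Xi s))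
               + (LINT s:{\<tau>..t}|lborel. S (t - s) (Bu s)))"
        using H t unfolding G0_def Xi_def Bu_def by (simp add: add.assoc)
      have st: "{\<tau>..t} \<subseteq> {\<tau>..T}" using t by auto
      have "(LINT s:{\<tau>..t}|lborel. S (t - s) (G0 s)) + (LINT s:{\<tau>..t}|lborel. S (t - s) (Xi s))
               + (LINT s:{\<tau>..t}|lborel. S (t - s) (Bu s)) = (LINT s:{\<tau>..t}|lborel. S (t - s) (G0 s + Xi s + Bu s))"
        by (rule comb3[OF set_integrable_subset[OF iG0 _ st] set_integrable_subset[OF iXi _ st] set_integrable_subset[OF iBu _ st]])
           (use t tau in auto)
      then show "w0 t = F t" using w unfolding F_def h0_def by simp
    qed
  qed
  have E1: "AE t in lborel. t \<in> {\<tau>1..T} \<longrightarrow> w1 t = S (t - \<tau>1) (w0 \<tau>1) + (LINT s:{\<tau>1..t}|lborel. S (t - s) (h1 s))"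
    using E1raw
  proof (rule eventually_mono)
    fix t assume H: "t \<in> {\<tau>1..T} \<longrightarrow>
        w1 t = S (t - \<tau>1) (w0 \<tau>1)
            + (LINT s:{\<tau>1..t}|lborel. S (t - s) (LINT \<sigma>:{\<tau>1..s}|lborel. K (s - \<sigma>) *\<^sub>R w1 \<sigma>))
            + (LINT s:{\<tau>1..t}|lborel. S (t - s) (LINT \<sigma>:{0..\<tau>1}|lborel. K (s - \<sigma>) *\<^sub>R (if \<sigma> \<le> \<tau> then \<xi> \<sigma> else w0 \<sigma>)))
            + (LINT s:{\<tau>1..t}|lborel. S (t - s) (B (u s)))"
    show "t \<in> {\<tau>1..T} \<longrightarrow> w1 t = S (t - \<tau>1) (w0 \<tau>1) + (LINT s:{\<tau>1..t}|lborel. S (t - s) (h1 s))"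
    proof
      assume t: "t \<in> {\<tau>1..T}"
      have w: "w1 t = S (t - \<tau>1) (w0 \<tau>1) + ((LINT s:{\<tau>1..t}|lborel. S (t - s) (G1 s)) + (LINT s:{\<tau>1..t}|lborel. S (t - s) (Y s))
               + (LINT s:{\<tau>1..t}|lborel. S (t - s) (Bu s)))"
        using H t unfolding G1_def Y_def Bu_def by (simp add: add.assoc)
      have st: "{\<tau>1..t} \<subseteq> {\<tau>1..T}" using t by auto
      have "(LINT s:{\<tau>1..t}|lborel. S (t - s) (G1 s)) + (LINT s:{\<tau>1..t}|lborel. S (t - s) (Y s))
               + (LINT s:{\<tau>1..t}|lborel. S (t - s) (Bu s)) = (LINT s:{\<tau>1..t}|lborel. S (t - s) (G1 s + Y s + Bu s))"
        by (rule comb3[OF set_integrable_subset[OF iG1 _ st] set_integrable_subset[OF iY _ st] set_integrable_subset[OF iBu1 _ st]])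
           (use t tau tau1 in auto)
      then show "w1 t = S (t - \<tau>1) (w0 \<tau>1) + (LINT s:{\<tau>1..t}|lborel. S (t - s) (h1 s))" using w unfolding h1_def by simp
    qed
  qed
  have Fsplit: "F t = S (t - \<tau>1) (F \<tau>1) + (LINT s:{\<tau>1..t}|lborel. S (t - s) (h0 s))" if t: "t \<in> {\<tau>1..T}" for t
  proof -
    have st: "{\<tau>..t} \<subseteq> {\<tau>..T}" using t by auto
    have sp: "(LINT s:{\<tau>..t}|lborel. S (t - s) (h0 s)) = S (t - \<tau>1) (LINT s:{\<tau>..\<tau>1}|lborel. S (\<tau>1 - s) (h0 s)) + (LINT s:{\<tau>1..t}|lborel. S (t - s) (h0 s))"
      by (rule split[OF set_integrable_subset[OF ih0 _ st]]) (use t tau tau1 in auto)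
    have "S ((t - \<tau>1) + (\<tau>1 - \<tau>)) \<xi>0 = S (t - \<tau>1) (S (\<tau>1 - \<tau>) \<xi>0)" by (rule S_comp) (use t tau1 in auto)
    then have s1: "S (t - \<tau>) \<xi>0 = S (t - \<tau>1) (S (\<tau>1 - \<tau>) \<xi>0)" by simp
    have "S (t - \<tau>1) (F \<tau>1) = S (t - \<tau>1) (S (\<tau>1 - \<tau>) \<xi>0) + S (t - \<tau>1) (LINT s:{\<tau>..\<tau>1}|lborel. S (\<tau>1 - s) (h0 s))"
      unfolding F_def by (rule S_add) (use t in auto)
    then show ?thesis unfolding F_def using sp s1 by (simp add: add.assoc)
  qed
  have vzero: "F \<tau>1 = w0 \<tau>1"
  proof (rule ccontr)
    assume ne: "F \<tau>1 \<noteq> w0 \<tau>1"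
    define e where "e = norm (F \<tau>1 - w0 \<tau>1)"
    have e0: "e > 0" unfolding e_def using ne by simp
    have t1in: "\<tau>1 \<in> {\<tau>..T}" using tau1 by auto
    have e30: "e / 3 > 0" using e0 by simp
    obtain d1 where d1: "d1 > 0" "\<And>t. t \<in> {\<tau>..T} \<Longrightarrow> dist t \<tau>1 < d1 \<Longrightarrow> dist (w0 t) (w0 \<tau>1) < e / 3"
      using ms0[unfolded continuous_on_iff, rule_format, OF t1in e30] by blast
    obtain d2 where d2: "d2 > 0" "\<And>h. 0 \<le> h \<Longrightarrow> h < d2 \<Longrightarrow> norm (S h (F \<tau>1) - F \<tau>1) < e / 3"
      using rc_eps[of "e/3" "F \<tau>1"] e0 by auto
    have e3: "e / 3 / (M + 1) > 0" using e0 M0 by simp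
    obtain d3 where d3: "d3 > 0" "\<And>t. t \<in> {\<tau>1..T} \<Longrightarrow> t - \<tau>1 < d3 \<Longrightarrow> \<bar>LINT s:{\<tau>1..t}|lborel. norm (h0 s)\<bar> < e / 3 / (M + 1)"
      using int_small[OF set_integrable_norm[OF ih01] e3] by blast
    define b where "b = min T (\<tau>1 + min d1 (min d2 d3))"
    have "\<tau>1 < b" unfolding b_def using d1 d2 d3 tau1 by simp
    then obtain t where t: "t \<in> {\<tau>1<..<b}" "t \<in> {\<tau>..T} \<longrightarrow> w0 t = F t"
      using EX_AE[OF E0] by blast
    have tT: "t \<in> {\<tau>..T}" "t \<in> {\<tau>1..T}" using t(1) tau1 unfolding b_def by auto
    have td: "t - \<tau>1 < d1" "t - \<tau>1 < d2" "t - \<tau>1 < d3" using t(1) unfolding b_def by auto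
    have wF: "w0 t = S (t - \<tau>1) (F \<tau>1) + (LINT s:{\<tau>1..t}|lborel. S (t - s) (h0 s))"
      using t(2) tT(1) Fsplit[OF tT(2)] by simp
    have hi: "set_integrable lborel {\<tau>1..t} h0" by (rule set_integrable_subset[OF ih01]) (use tT in auto)
    have n1: "norm (LINT s:{\<tau>1..t}|lborel. S (t - s) (h0 s)) \<le> M * (LINT s:{\<tau>1..t}|lborel. norm (h0 s))"
      by (rule IL(2)[OF hi]) (use tT tau tau1 in auto)
    have "(LINT s:{\<tau>1..t}|lborel. norm (h0 s)) < e / 3 / (M + 1)" using d3(2)[OF tT(2) td(3)] by simp
    then have n1': "norm (LINT s:{\<tau>1..t}|lborel. S (t - s) (h0 s)) < e / 3"
      by (rule small_mult[OF M0 e30 n1])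
    have n2: "norm (S (t - \<tau>1) (F \<tau>1) - F \<tau>1) < e / 3" using d2(2)[of "t - \<tau>1"] td tT by simp
    have n3: "norm (w0 t - w0 \<tau>1) < e / 3" using d1(2)[OF tT(1)] td t(1) by (simp add: dist_norm dist_real_def)
    have "F \<tau>1 - w0 \<tau>1 = (F \<tau>1 - S (t - \<tau>1) (F \<tau>1)) - (LINT s:{\<tau>1..t}|lborel. S (t - s) (h0 s)) + (w0 t - w0 \<tau>1)"
      using wF by simp
    then have "e = norm ((F \<tau>1 - S (t - \<tau>1) (F \<tau>1)) - (LINT s:{\<tau>1..t}|lborel. S (t - s) (h0 s)) + (w0 t - w0 \<tau>1))"
      unfolding e_def by (rule arg_cong[of _ _ norm])
    moreover have "norm ((F \<tau>1 - S (t - \<tau>1) (F \<tau>1)) - (LINT s:{\<tau>1..t}|lborel. S (t - s) (h0 s)) + (w0 t - w0 \<tau>1))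
        \<le> norm ((F \<tau>1 - S (t - \<tau>1) (F \<tau>1)) - (LINT s:{\<tau>1..t}|lborel. S (t - s) (h0 s))) + norm (w0 t - w0 \<tau>1)"
      by (rule norm_triangle_ineq)
    moreover have "norm ((F \<tau>1 - S (t - \<tau>1) (F \<tau>1)) - (LINT s:{\<tau>1..t}|lborel. S (t - s) (h0 s)))
        \<le> norm (F \<tau>1 - S (t - \<tau>1) (F \<tau>1)) + norm (LINT s:{\<tau>1..t}|lborel. S (t - s) (h0 s))"
      by (rule norm_triangle_ineq4)
    ultimately have "e \<le> norm (F \<tau>1 - S (t - \<tau>1) (F \<tau>1)) + norm (LINT s:{\<tau>1..t}|lborel. S (t - s) (h0 s)) + norm (w0 t - w0 \<tau>1)"
      by linarith
    moreover have "norm (F \<tau>1 - S (t - \<tau>1) (F \<tau>1)) < e / 3" using n2 by (simp add: norm_minus_commute)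
    ultimately show False using n1' n3 by linarith
  qed
  have dform: "AE t in lborel. t \<in> {\<tau>1..T} \<longrightarrow> w0 t - w1 t = (LINT s:{\<tau>1..t}|lborel. S (t - s) (LINT \<sigma>:{\<tau>1..s}|lborel. K (s - \<sigma>) *\<^sub>R (w0 \<sigma> - w1 \<sigma>)))"
    using E0 E1
  proof eventually_elim
    case (elim t)
    show ?case
    proof
      assume t: "t \<in> {\<tau>1..T}"
      then have t0: "t \<in> {\<tau>..T}" using tau1 by auto
      have st: "{\<tau>1..t} \<subseteq> {\<tau>1..T}" using t by auto
      have "w0 t - w1 t = (LINT s:{\<tau>1..t}|lborel. S (t - s) (h0 s)) - (LINT s:{\<tau>1..t}|lborel. S (t - s) (h1 s))"
        using elim t t0 Fsplit[OF t] vzero by simp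
      also have "\<dots> = (LINT s:{\<tau>1..t}|lborel. S (t - s) (h0 s - h1 s))"
        by (rule comb_diff[OF set_integrable_subset[OF ih01 _ st] set_integrable_subset[OF ih1 _ st]]) (use t tau tau1 in auto)
      also have "\<dots> = (LINT s:{\<tau>1..t}|lborel. S (t - s) (D s))"
        by (rule set_lebesgue_integral_cong) (use t Deq in auto)
      finally show "w0 t - w1 t = (LINT s:{\<tau>1..t}|lborel. S (t - s) (LINT \<sigma>:{\<tau>1..s}|lborel. K (s - \<sigma>) *\<^sub>R (w0 \<sigma> - w1 \<sigma>)))"
        unfolding D_def .
    qed
  qed
  have dc: "continuous_on {\<tau>1..T} (\<lambda>t. w0 t - w1 t)"
    by (intro continuous_on_diff ms1 continuous_on_subset[OF ms0 sub1])
  have "\<forall>t\<in>{\<tau>1..T}. w0 t - w1 t = 0"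
    by (rule uniq[OF K dc _ _ dform]) (use tau tau1 in auto)
  then show ?thesis by auto
qed


end
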